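(* For positive integers $n$, $k$ and $r$, \[S_{\leq m}(n,k,r)=\sum_{i=r}^{n}{n\choose i}{i\brace r}_{\leq m}{n-i\brace k-1}_{\leq m}(k-1)!\text{.}\]
   Context: $S_{\leq m}(n,k,r)$ (mixed restricted Stirling number of the second kind) is the number of ways to distribute the elements of $[n]$ into non-empty cells, where there are $r$ cells carrying the label $1$ (indistinguishable among themselves) and one cell each with labels $2,\dots,k$, such that every cell contains at most $m$ elements. ${n\brace k}_{\leq m}$ is the number of partitions of $[n]$ into $k$ non-empty blocks each of size at most $m$. *)

theory Defs
  imports Main "HOL-Library.Disjoint_Sets" "HOL-Library.FuncSet"
begin

definition stirling2_le :: "nat \<Rightarrow> nat \<Rightarrow> nat \<Rightarrow> nat" where
  "stirling2_le m n k =
     card {P. partition_on {1..n} P \<and> card P = k \<and> (\<forall>B\<in>P. card B \<le> m)}"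

text \<open>Mixed restricted Stirling number S_{<=m}(n,k,r): distributions of [n] into non-empty
  cells, r of them carrying label 1 (indistinguishable among themselves, modelled as an
  unordered set P of cells) and one cell g i for each label i in {2..k}; all cells pairwise
  disjoint, covering [n], each of size at most m.\<close>
definition mixed_stirling_le :: "nat \<Rightarrow> nat \<Rightarrow> nat \<Rightarrow> nat \<Rightarrow> nat" where
  "mixed_stirling_le m n k r =
     card {(P, g). g \<in> {2..k} \<rightarrow>\<^sub>E Pow {1..n} \<and>
                   partition_on {1..n} (P \<union> g ` {2..k}) \<and>
                   P \<inter> g ` {2..k} = {} \<and> inj_on g {2..k} \<and>
                   card P = r \<and>
                   (\<forall>B \<in> P \<union> g ` {2..k}. card B \<le> m)}"

end

theory Submission
  imports Defs
begin

definition SP :: "nat \<Rightarrow> nat set \<Rightarrow> nat \<Rightarrow> nat set set set" where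
  "SP m A k = {P. partition_on A P \<and> card P = k \<and> (\<forall>B\<in>P. card B \<le> m)}"

definition OP :: "nat \<Rightarrow> nat set \<Rightarrow> nat set \<Rightarrow> (nat \<Rightarrow> nat set) set" where
  "OP m A K = {g. g \<in> K \<rightarrow>\<^sub>E Pow A \<and> partition_on A (g ` K) \<and> inj_on g K \<and> (\<forall>B\<in>g ` K. card B \<le> m)}"

lemma finite_SP: "finite A \<Longrightarrow> finite (SP m A k)"
  by (rule finite_subset[OF _ finitely_many_partition_on[of A]]) (auto simp: SP_def)

lemma SP_le:
  assumes "finite A" "finite B" "card A = card B"
  shows "card (SP m A k) \<le> card (SP m B k)"
proof -
  obtain f where f: "bij_betw f A B" using finite_same_card_bij assms by blast
  have injf: "inj_on f A" and fA: "f ` A = B" using f by (auto simp: bij_betw_def)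
  define \<Phi> where "\<Phi> = (\<lambda>P. (`) f ` P)"
  have sub: "P \<subseteq> Pow A" if "P \<in> SP m A k" for P
    using that by (auto simp: SP_def dest: partition_onD1)
  have "inj_on \<Phi> (Pow (Pow A))"
    unfolding \<Phi>_def by (intro inj_on_image_Pow inj_on_image_Pow injf)
  then have inj: "inj_on \<Phi> (SP m A k)"
    by (rule inj_on_subset) (use sub in auto)
  have "\<Phi> P \<in> SP m B k" if P: "P \<in> SP m A k" for P
  proof -
    have pa: "partition_on A P" and cP: "card P = k" and cb: "\<forall>b\<in>P. card b \<le> m"
      using P by (auto simp: SP_def)
    have "partition_on (f ` A) ((`) f ` P - {{}})"
      by (rule partition_on_inj_image[OF pa injf])
    moreover have "(`) f ` P - {{}} = \<Phi> P"
      using partition_onD3[OF pa] by (auto simp: \<Phi>_def)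
    ultimately have "partition_on B (\<Phi> P)" using fA by simp
    moreover have "card (\<Phi> P) = k"
    proof -
      have "inj_on ((`) f) P"
        using inj_on_image_Pow[OF injf] sub[OF P] by (rule inj_on_subset)
      then show ?thesis using cP by (simp add: \<Phi>_def card_image)
    qed
    moreover have "\<forall>b\<in>\<Phi> P. card b \<le> m"
    proof
      fix c assume "c \<in> \<Phi> P"
      then obtain b where b: "b \<in> P" "c = f ` b" by (auto simp: \<Phi>_def)
      have "inj_on f b" using injf sub[OF P] b(1) by (auto intro: inj_on_subset)
      then show "card c \<le> m" using b cb by (simp add: card_image)
    qed
    ultimately show ?thesis by (simp add: SP_def)
  qed
  then show ?thesis
    by (intro card_inj_on_le[OF inj] finite_SP assms) auto
qed

lemma SP_card:
  assumes "finite A"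
  shows "card (SP m A k) = stirling2_le m (card A) k"
proof -
  have "card (SP m A k) = card (SP m {1..card A} k)"
    using SP_le[of A "{1..card A}"] SP_le[of "{1..card A}" A] assms by (intro antisym) auto
  then show ?thesis by (simp add: stirling2_le_def SP_def)
qed

lemma partition_card_le:
  assumes "finite A" "partition_on A P"
  shows "card P \<le> card A"
proof -
  have fin: "\<And>p. p \<in> P \<Longrightarrow> finite p"
    using assms partition_onD1[OF assms(2)] by (auto intro: finite_subset)
  have "card A = (\<Sum>p\<in>P. card p)" by (rule product_partition[OF assms(2) fin])
  also have "\<dots> \<ge> (\<Sum>p\<in>P. 1)"
  proof (rule sum_mono)
    fix p assume "p \<in> P"
    then have "p \<noteq> {}" using partition_onD3[OF assms(2)] by auto
    then show "1 \<le> card p" using fin[OF \<open>p \<in> P\<close>] by (simp add: Suc_le_eq card_gt_0_iff)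
  qed
  finally show ?thesis by simp
qed

lemma inj_onto_eq:
  assumes "g \<in> K \<rightarrow>\<^sub>E Q" "inj_on g K" "finite Q" "card Q = card K"
  shows "g ` K = Q"
proof -
  have "g ` K \<subseteq> Q" using assms(1) by auto
  moreover have "card (g ` K) = card Q" using assms(2,4) by (simp add: card_image)
  ultimately show ?thesis using assms(3) by (simp add: card_subset_eq)
qed

lemma prod_fact: "(\<Prod>i\<in>{0..<n}. n - i) = fact n"
  using fact_prod_rev[of n, where 'a = nat] by simp

lemma OP_card:
  assumes "finite A" "finite K"
  shows "card (OP m A K) = card (SP m A (card K)) * fact (card K)"
proof -
  have eq: "OP m A K = (\<Union>Q\<in>SP m A (card K). {g \<in> K \<rightarrow>\<^sub>E Q. inj_on g K})"
  proof (rule set_eqI, rule iffI)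
    fix g assume "g \<in> OP m A K"
    then have g: "g \<in> K \<rightarrow>\<^sub>E Pow A" "partition_on A (g ` K)" "inj_on g K" "\<forall>B\<in>g ` K. card B \<le> m"
      by (auto simp: OP_def)
    have "g ` K \<in> SP m A (card K)" using g by (simp add: SP_def card_image)
    moreover have "g \<in> K \<rightarrow>\<^sub>E g ` K" using g(1) by (auto simp: PiE_def)
    ultimately show "g \<in> (\<Union>Q\<in>SP m A (card K). {g \<in> K \<rightarrow>\<^sub>E Q. inj_on g K})" using g(3) by blast
  next
    fix g assume "g \<in> (\<Union>Q\<in>SP m A (card K). {g \<in> K \<rightarrow>\<^sub>E Q. inj_on g K})"
    then obtain Q where Q: "Q \<in> SP m A (card K)" "g \<in> K \<rightarrow>\<^sub>E Q" "inj_on g K" by blast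
    have pQ: "partition_on A Q" "card Q = card K" "\<forall>B\<in>Q. card B \<le> m" using Q(1) by (auto simp: SP_def)
    have "finite Q" using finite_elements[OF assms(1) pQ(1)] .
    then have gK: "g ` K = Q" using inj_onto_eq Q pQ by blast
    have "Q \<subseteq> Pow A" using partition_onD1[OF pQ(1)] by auto
    then have "g \<in> K \<rightarrow>\<^sub>E Pow A" using Q(2) by (auto simp: PiE_def)
    then show "g \<in> OP m A K" using gK pQ Q(3) by (auto simp: OP_def)
  qed
  have fibre: "card {g \<in> K \<rightarrow>\<^sub>E Q. inj_on g K} = fact (card K)" if "Q \<in> SP m A (card K)" for Q
  proof -
    have pQ: "partition_on A Q" "card Q = card K" using that by (auto simp: SP_def)
    have "finite Q" using finite_elements[OF assms(1) pQ(1)] .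
    then have "card {g \<in> K \<rightarrow>\<^sub>E Q. inj_on g K} = card Q ^ (card K - card K) * prod ((-) (card Q)) {0..<card K}"
      by (intro card_inj_on_subset_funcset assms) auto
    also have "\<dots> = fact (card K)" using pQ(2) prod_fact by simp
    finally show ?thesis .
  qed
  have "card (OP m A K) = (\<Sum>Q\<in>SP m A (card K). card {g \<in> K \<rightarrow>\<^sub>E Q. inj_on g K})"
    unfolding eq
  proof (rule card_UN_disjoint)
    show "finite (SP m A (card K))" by (rule finite_SP[OF assms(1)])
    show "\<forall>Q\<in>SP m A (card K). finite {g \<in> K \<rightarrow>\<^sub>E Q. inj_on g K}"
    proof
      fix Q assume "Q \<in> SP m A (card K)"
      then have "finite Q" using finite_elements[OF assms(1)] by (auto simp: SP_def)
      then show "finite {g \<in> K \<rightarrow>\<^sub>E Q. inj_on g K}"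
        using finite_PiE[OF assms(2), of "\<lambda>_. Q"] by auto
    qed
    show "\<forall>Q\<in>SP m A (card K). \<forall>Q'\<in>SP m A (card K). Q \<noteq> Q' \<longrightarrow>
        {g \<in> K \<rightarrow>\<^sub>E Q. inj_on g K} \<inter> {g \<in> K \<rightarrow>\<^sub>E Q'. inj_on g K} = {}"
    proof (intro ballI impI)
      fix Q Q' assume Q: "Q \<in> SP m A (card K)" "Q' \<in> SP m A (card K)" "Q \<noteq> Q'"
      have f1: "finite Q" "finite Q'" using Q(1,2) finite_elements[OF assms(1)] by (auto simp: SP_def)
      have c: "card Q = card K" "card Q' = card K" using Q(1,2) by (auto simp: SP_def)
      show "{g \<in> K \<rightarrow>\<^sub>E Q. inj_on g K} \<inter> {g \<in> K \<rightarrow>\<^sub>E Q'. inj_on g K} = {}"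
      proof (rule ccontr)
        assume "\<not> ?thesis"
        then obtain g where "g \<in> K \<rightarrow>\<^sub>E Q" "g \<in> K \<rightarrow>\<^sub>E Q'" "inj_on g K" by blast
        then have "g ` K = Q" "g ` K = Q'" using inj_onto_eq f1 c by blast+
        then show False using Q(3) by simp
      qed
    qed
  qed
  also have "\<dots> = (\<Sum>Q\<in>SP m A (card K). fact (card K))" using fibre by (intro sum.cong) auto
  finally show ?thesis by simp
qed


lemma decomp:
  fixes N K :: "nat set"
  assumes finN: "finite N"
  shows "{(P, g). g \<in> K \<rightarrow>\<^sub>E Pow N \<and> partition_on N (P \<union> g ` K) \<and> P \<inter> g ` K = {} \<and>
            inj_on g K \<and> card P = r \<and> (\<forall>B \<in> P \<union> g ` K. card B \<le> m)}
        = (\<Union>S\<in>Pow N. SP m S r \<times> OP m (N - S) K)" (is "?L = ?R")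
proof (rule set_eqI, rule iffI)
  fix x assume "x \<in> ?L"
  then obtain P g where x: "x = (P, g)" and g: "g \<in> K \<rightarrow>\<^sub>E Pow N" and pa: "partition_on N (P \<union> g ` K)"
    and dj: "P \<inter> g ` K = {}" and inj: "inj_on g K" and cP: "card P = r"
    and cb: "\<forall>B \<in> P \<union> g ` K. card B \<le> m" by blast
  define S where "S = \<Union>P"
  have U: "\<Union>P \<union> \<Union>(g ` K) = N" using partition_onD1[OF pa] by auto
  have dis: "disjoint (P \<union> g ` K)" using partition_onD2[OF pa] .
  have ne: "{} \<notin> P \<union> g ` K" using partition_onD3[OF pa] .
  have SN: "S \<subseteq> N" using U S_def by auto
  have pP: "partition_on S P"
    using dis ne unfolding partition_on_def S_def by (auto intro: pairwise_subset)
  have gdisj: "g i \<inter> S = {}" if "i \<in> K" for i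
  proof -
    have "g i \<inter> p = {}" if "p \<in> P" for p
    proof -
      have "g i \<noteq> p" using dj \<open>i \<in> K\<close> that by auto
      then show ?thesis using dis \<open>i \<in> K\<close> that by (auto simp: disjoint_def)
    qed
    then show ?thesis by (auto simp: S_def)
  qed
  have gN: "g \<in> K \<rightarrow>\<^sub>E Pow (N - S)" using g gdisj by (auto simp: PiE_def Pi_def)
  have pg: "partition_on (N - S) (g ` K)"
    unfolding partition_on_def
  proof (intro conjI)
    show "\<Union>(g ` K) = N - S" using U gdisj S_def by auto
    show "disjoint (g ` K)" using dis by (auto intro: pairwise_subset)
    show "{} \<notin> g ` K" using ne by auto
  qed
  have "P \<in> SP m S r" using pP cP cb by (auto simp: SP_def)
  moreover have "g \<in> OP m (N - S) K" using gN pg inj cb by (auto simp: OP_def)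
  ultimately show "x \<in> ?R" using SN x by blast
next
  fix x assume "x \<in> ?R"
  then obtain S P g where x: "x = (P, g)" and SN: "S \<subseteq> N" and P: "P \<in> SP m S r" and g: "g \<in> OP m (N - S) K"
    by blast
  have pP: "partition_on S P" "card P = r" "\<forall>B\<in>P. card B \<le> m" using P by (auto simp: SP_def)
  have pg: "g \<in> K \<rightarrow>\<^sub>E Pow (N - S)" "partition_on (N - S) (g ` K)" "inj_on g K" "\<forall>B\<in>g ` K. card B \<le> m"
    using g by (auto simp: OP_def)
  have gN: "g \<in> K \<rightarrow>\<^sub>E Pow N" using pg(1) by (auto simp: PiE_def Pi_def)
  have U1: "\<Union>P = S" using partition_onD1[OF pP(1)] by simp
  have U2: "\<Union>(g ` K) = N - S" using partition_onD1[OF pg(2)] by simp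
  have pa: "partition_on N (P \<union> g ` K)"
    unfolding partition_on_def
  proof (intro conjI)
    show "\<Union>(P \<union> g ` K) = N" using U1 U2 SN by auto
    show "disjoint (P \<union> g ` K)"
      by (rule disjoint_union[OF partition_onD2[OF pP(1)] partition_onD2[OF pg(2)]]) (use U1 U2 in auto)
    show "{} \<notin> P \<union> g ` K" using partition_onD3[OF pP(1)] partition_onD3[OF pg(2)] by auto
  qed
  have dj: "P \<inter> g ` K = {}"
  proof (rule ccontr)
    assume "P \<inter> g ` K \<noteq> {}"
    then obtain b where b: "b \<in> P" "b \<in> g ` K" by blast
    have "b \<noteq> {}" using b(1) partition_onD3[OF pP(1)] by auto
    moreover have "b \<subseteq> S" "b \<subseteq> N - S" using b U1 U2 by auto
    ultimately show False by auto
  qed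
  show "x \<in> ?L" using x gN pa dj pg(3) pP(2,3) pg(4) by auto
qed

lemma sum_Pow_card:
  fixes h :: "nat \<Rightarrow> nat"
  assumes "finite N"
  shows "(\<Sum>S\<in>Pow N. h (card S)) = (\<Sum>i\<le>card N. (card N choose i) * h i)"
proof -
  have "(\<Sum>S\<in>Pow N. h (card S)) = (\<Sum>i\<le>card N. \<Sum>S\<in>{S. S \<in> Pow N \<and> card S = i}. h (card S))"
    by (rule sum.group[symmetric]) (use assms card_mono in auto)
  also have "\<dots> = (\<Sum>i\<le>card N. \<Sum>S\<in>{B. B \<subseteq> N \<and> card B = i}. h i)"
    by (intro sum.cong) auto
  also have "\<dots> = (\<Sum>i\<le>card N. (card N choose i) * h i)"
    using n_subsets[OF assms] by simp
  finally show ?thesis .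
qed

theorem mainTheorem11:
  fixes n k r m :: nat
  assumes "n > 0" and "k > 0" and "r > 0"
  shows "mixed_stirling_le m n k r =
         (\<Sum>i=r..n. (n choose i) * stirling2_le m i r * stirling2_le m (n - i) (k - 1) * fact (k - 1))"
proof -
  define N where "N = {1..n}"
  define K where "K = {2..k}"
  have fN: "finite N" and cN: "card N = n" and fK: "finite K" and cK: "card K = k - 1"
    by (auto simp: N_def K_def)
  define h where "h = (\<lambda>i. stirling2_le m i r * (stirling2_le m (n - i) (k - 1) * fact (k - 1)))"
  have "mixed_stirling_le m n k r = card (\<Union>S\<in>Pow N. SP m S r \<times> OP m (N - S) K)"
    unfolding mixed_stirling_le_def N_def[symmetric] K_def[symmetric] decomp[OF fN] ..
  also have "\<dots> = (\<Sum>S\<in>Pow N. card (SP m S r \<times> OP m (N - S) K))"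
  proof (rule card_UN_disjoint)
    show "finite (Pow N)" using fN by simp
    show "\<forall>S\<in>Pow N. finite (SP m S r \<times> OP m (N - S) K)"
    proof
      fix S assume S: "S \<in> Pow N"
      then have fS: "finite S" using fN finite_subset by auto
      have "finite (OP m (N - S) K)"
      proof (rule finite_subset)
        show "OP m (N - S) K \<subseteq> K \<rightarrow>\<^sub>E Pow (N - S)" by (auto simp: OP_def)
        show "finite (K \<rightarrow>\<^sub>E Pow (N - S))" using fK fN by (intro finite_PiE) auto
      qed
      then show "finite (SP m S r \<times> OP m (N - S) K)" using finite_SP[OF fS] by simp
    qed
    show "\<forall>S\<in>Pow N. \<forall>S'\<in>Pow N. S \<noteq> S' \<longrightarrow>
      (SP m S r \<times> OP m (N - S) K) \<inter> (SP m S' r \<times> OP m (N - S') K) = {}"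
      by (auto simp: SP_def dest: partition_onD1)
  qed
  also have "\<dots> = (\<Sum>S\<in>Pow N. h (card S))"
  proof (rule sum.cong[OF refl])
    fix S assume S: "S \<in> Pow N"
    then have fS: "finite S" using fN finite_subset by auto
    have cd: "card (N - S) = n - card S" using S fN cN by (simp add: card_Diff_subset fS)
    show "card (SP m S r \<times> OP m (N - S) K) = h (card S)"
      using SP_card[OF fS] OP_card[of "N - S" K m] fN fK cd cK SP_card[of "N - S" m "k - 1"]
      by (simp add: card_cartesian_product h_def)
  qed
  also have "\<dots> = (\<Sum>i\<le>n. (n choose i) * h i)" using sum_Pow_card[OF fN] cN by simp
  also have "\<dots> = (\<Sum>i=r..n. (n choose i) * h i)"
  proof (rule sum.mono_neutral_right)
    show "finite {..n}" by simp
    show "{r..n} \<subseteq> {..n}" by auto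
    show "\<forall>i\<in>{..n} - {r..n}. (n choose i) * h i = 0"
    proof
      fix i assume "i \<in> {..n} - {r..n}"
      then have "i < r" by auto
      then have "SP m {1..i} r = {}"
        using partition_card_le[of "{1..i}"] by (fastforce simp: SP_def)
      then have "stirling2_le m i r = 0" using SP_card[of "{1..i}" m r] by simp
      then show "(n choose i) * h i = 0" by (simp add: h_def)
    qed
  qed
  finally show ?thesis by (simp add: h_def mult.assoc)
qed

end
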